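(* Let $v$ be a subharmonic function on $\mathbf D$ with $v(z)\le C\log\frac{e}{1-|z|}$ for all $z\in\mathbf D$. Suppose that for some $\sigma>0$, $\theta\in[0,2\pi]$ and $r_0\in(0,1)$ we have $v(re^{i\theta})<-\sigma\log\frac{e}{1-r}$ for all $r>r_0$. Then there are $\tau_2=\tau_2(C,\sigma)>0$ and $r_1=r_1(r_0)<1$ such that $v(re^{i(\theta+\delta)})<-\frac\sigma2\log\frac{e}{1-r}$ for all $r>r_1$ and all $|\delta|<\tau_2(1-r)$.
   Context: $\mathbf D$ is the open unit disc. *)

theory Defs
  imports "HOL-Analysis.Analysis"
begin

definition unit_disc :: "complex set" where
  "unit_disc = ball 0 1"

definition usc_on :: "complex set \<Rightarrow> (complex \<Rightarrow> ereal) \<Rightarrow> bool" where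
  "usc_on S v \<longleftrightarrow>
     (\<forall>z\<in>S. \<forall>c. v z < c \<longrightarrow> (\<forall>\<^sub>F w in at z within S. v w < c))"

definition circle_mean :: "(complex \<Rightarrow> ereal) \<Rightarrow> complex \<Rightarrow> real \<Rightarrow> ereal" where
  "circle_mean v z r =
     (enn2ereal (\<integral>\<^sup>+ t. indicator {0..2*pi} t * e2ennreal (v (z + of_real r * cis t)) \<partial>lborel)
      - enn2ereal (\<integral>\<^sup>+ t. indicator {0..2*pi} t * e2ennreal (- v (z + of_real r * cis t)) \<partial>lborel))
     / ereal (2 * pi)"

text \<open>Subharmonic on an open set S (Ransford's definition): upper semicontinuous with values
  in [-infinity, infinity), satisfying the local submean inequality.\<close>
definition subharmonic_on :: "complex set \<Rightarrow> (complex \<Rightarrow> ereal) \<Rightarrow> bool" where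
  "subharmonic_on S v \<longleftrightarrow>
     (\<forall>z\<in>S. v z < \<infinity>) \<and> usc_on S v \<and>
     (\<forall>z\<in>S. \<exists>\<rho>>0. \<forall>r. 0 < r \<and> r < \<rho> \<longrightarrow> v z \<le> circle_mean v z r)"

end

theory Submission
  imports Defs "HOL-Complex_Analysis.Complex_Analysis"
begin


lemma holo_mean:
  fixes f :: "complex \<Rightarrow> complex"
  assumes "f holomorphic_on S" "open S" "cball z r \<subseteq> S" "0 < r"
  shows "((\<lambda>t. f (z + of_real r * cis t)) has_integral (2*pi*f z)) {0..2*pi}"
proof -
  have "f holomorphic_on cball z r" using assms holomorphic_on_subset by blast
  from Cauchy_integral_circlepath_simple[OF this, of z] assms(4)
  have "((\<lambda>u. f u/(u-z)) has_contour_integral (2 * of_real pi * \<i> * f z)) (circlepath z r)"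
    by simp
  then have "((\<lambda>t. f (z + r * cis t)/(z + r * cis t - z) * r * \<i> * cis t) has_integral (2 * of_real pi * \<i> * f z)) {0..2*pi}"
    unfolding circlepath_def by (subst (asm) has_contour_integral_part_circlepath_iff) auto
  then have "((\<lambda>t. \<i> * f (z + r * cis t)) has_integral (2 * of_real pi * \<i> * f z)) {0..2*pi}"
    by (rule has_integral_eq[rotated]) (use assms(4) in \<open>auto simp: field_simps\<close>)
  from has_integral_mult_right[OF this, of "-\<i>"]
  show ?thesis by (simp add: algebra_simps)
qed

lemma holo_mean_Re:
  fixes f :: "complex \<Rightarrow> complex"
  assumes "f holomorphic_on S" "open S" "cball z r \<subseteq> S" "0 < r"
  shows "((\<lambda>t. Re (f (z + of_real r * cis t))) has_integral (2*pi*Re (f z))) {0..2*pi}"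
  using has_integral_Re[OF holo_mean[OF assms]] by simp

lemma circle_mean_le:
  fixes g :: "real \<Rightarrow> real"
  assumes cont: "continuous_on {0..2*pi} g"
    and gi: "(g has_integral I) {0..2*pi}"
    and le: "\<And>t. t \<in> {0..2*pi} \<Longrightarrow> v (z + of_real r * cis t) \<le> ereal (g t)"
  shows "circle_mean v z r \<le> ereal (I / (2*pi))"
proof -
  define S where "S = {0..2*pi::real}"
  define gp where "gp t = max (g t) 0" for t
  define gn where "gn t = max (- g t) 0" for t
  have cp: "continuous_on S gp" unfolding gp_def S_def by (intro continuous_intros cont)
  have cn: "continuous_on S gn" unfolding gn_def S_def by (intro continuous_intros cont)
  have ip: "set_integrable lborel S gp" unfolding S_def using cp S_def by (intro borel_integrable_atLeastAtMost') auto
  have in': "set_integrable lborel S gn" unfolding S_def using cn S_def by (intro borel_integrable_atLeastAtMost') auto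
  define Lp where "Lp = (LINT t:S|lborel. gp t)"
  define Ln where "Ln = (LINT t:S|lborel. gn t)"
  have hp: "(gp has_integral Lp) S"
    using set_borel_integral_eq_integral[OF ip] unfolding Lp_def by (simp add: integrable_integral)
  have hn: "(gn has_integral Ln) S"
    using set_borel_integral_eq_integral[OF in'] unfolding Ln_def by (simp add: integrable_integral)
  have "((\<lambda>t. gp t - gn t) has_integral (Lp - Ln)) S" using has_integral_diff[OF hp hn] .
  moreover have "(\<lambda>t. gp t - gn t) = g" unfolding gp_def gn_def by (auto simp: fun_eq_iff)
  ultimately have "I = Lp - Ln" using gi unfolding S_def by (metis has_integral_unique)
  have P: "(\<integral>\<^sup>+ t. indicator S t * e2ennreal (v (z + of_real r * cis t)) \<partial>lborel) \<le> ennreal Lp"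
  proof -
    have "(\<integral>\<^sup>+ t. indicator S t * e2ennreal (v (z + of_real r * cis t)) \<partial>lborel)
        \<le> (\<integral>\<^sup>+ t. ennreal (indicator S t *\<^sub>R gp t) \<partial>lborel)"
    proof (intro nn_integral_mono)
      fix t
      show "indicator S t * e2ennreal (v (z + of_real r * cis t)) \<le> ennreal (indicator S t *\<^sub>R gp t)"
      proof (cases "t \<in> S")
        case True
        have "e2ennreal (v (z + of_real r * cis t)) \<le> e2ennreal (ereal (g t))"
          using le True unfolding S_def by (intro e2ennreal_mono) auto
        also have "\<dots> = ennreal (gp t)" unfolding gp_def
          by (auto simp: max_def ennreal_neg)
        finally show ?thesis using True by simp
      qed simp
    qed
    also have "\<dots> = ennreal Lp" unfolding Lp_def set_lebesgue_integral_def
      using ip unfolding set_integrable_def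
      by (intro nn_integral_eq_integral) (auto simp: gp_def indicator_def)
    finally show ?thesis .
  qed
  have N: "ennreal Ln \<le> (\<integral>\<^sup>+ t. indicator S t * e2ennreal (- v (z + of_real r * cis t)) \<partial>lborel)"
  proof -
    have "ennreal Ln = (\<integral>\<^sup>+ t. ennreal (indicator S t *\<^sub>R gn t) \<partial>lborel)" unfolding Ln_def set_lebesgue_integral_def
      using in' unfolding set_integrable_def
      by (intro nn_integral_eq_integral[symmetric]) (auto simp: gn_def indicator_def)
    also have "\<dots> \<le> (\<integral>\<^sup>+ t. indicator S t * e2ennreal (- v (z + of_real r * cis t)) \<partial>lborel)"
    proof (intro nn_integral_mono)
      fix t
      show "ennreal (indicator S t *\<^sub>R gn t) \<le> indicator S t * e2ennreal (- v (z + of_real r * cis t))"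
      proof (cases "t \<in> S")
        case True
        have "ennreal (gn t) = e2ennreal (ereal (- g t))" unfolding gn_def
          by (auto simp: max_def ennreal_neg)
        also have "\<dots> \<le> e2ennreal (- v (z + of_real r * cis t))"
          using le True unfolding S_def by (intro e2ennreal_mono) (metis ereal_minus_le_minus uminus_ereal.simps(1))
        finally show ?thesis using True by simp
      qed simp
    qed
    finally show ?thesis .
  qed
  have Lp0: "0 \<le> Lp" using hp by (rule has_integral_nonneg) (auto simp: gp_def)
  have Ln0: "0 \<le> Ln" using hn by (rule has_integral_nonneg) (auto simp: gn_def)
  have "enn2ereal (\<integral>\<^sup>+ t. indicator S t * e2ennreal (v (z + of_real r * cis t)) \<partial>lborel) \<le> ereal Lp"
    using P Lp0 by (metis enn2ereal_ennreal less_eq_ennreal.rep_eq)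
  moreover have "ereal Ln \<le> enn2ereal (\<integral>\<^sup>+ t. indicator S t * e2ennreal (- v (z + of_real r * cis t)) \<partial>lborel)"
    using N Ln0 by (metis enn2ereal_ennreal less_eq_ennreal.rep_eq)
  ultimately have "enn2ereal (\<integral>\<^sup>+ t. indicator S t * e2ennreal (v (z + of_real r * cis t)) \<partial>lborel)
      - enn2ereal (\<integral>\<^sup>+ t. indicator S t * e2ennreal (- v (z + of_real r * cis t)) \<partial>lborel) \<le> ereal Lp - ereal Ln"
    by (rule ereal_minus_mono)
  then have "circle_mean v z r \<le> ereal (Lp - Ln) / ereal (2*pi)"
    unfolding circle_mean_def S_def by (intro ereal_divide_right_mono) auto
  then show ?thesis using \<open>I = Lp - Ln\<close> by simp
qed

lemma usc_max:
  fixes u :: "complex \<Rightarrow> ereal"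
  assumes "compact K" "K \<noteq> {}"
    and usc: "\<And>z c. z \<in> K \<Longrightarrow> u z < c \<Longrightarrow> \<exists>U. open U \<and> z \<in> U \<and> (\<forall>w\<in>U\<inter>K. u w < c)"
  shows "\<exists>z\<in>K. \<forall>w\<in>K. u w \<le> u z"
proof (rule ccontr)
  assume "\<not> ?thesis"
  then have nm: "\<forall>z\<in>K. \<exists>w\<in>K. u z < u w" by (auto simp: not_le)
  define M where "M = Sup (u ` K)"
  have lt: "\<forall>z\<in>K. u z < M"
    using nm unfolding M_def by (meson SUP_upper order_less_le_trans)
  have "\<forall>z\<in>K. \<exists>c U. u z < c \<and> c < M \<and> open U \<and> z \<in> U \<and> (\<forall>w\<in>U\<inter>K. u w < c)"
  proof
    fix z assume z: "z \<in> K"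
    then obtain c where c: "u z < c" "c < M" using lt dense by blast
    then obtain U where "open U \<and> z \<in> U \<and> (\<forall>w\<in>U\<inter>K. u w < c)" using usc z by blast
    then show "\<exists>c U. u z < c \<and> c < M \<and> open U \<and> z \<in> U \<and> (\<forall>w\<in>U\<inter>K. u w < c)" using c by blast
  qed
  then obtain c U where cU: "\<And>z. z \<in> K \<Longrightarrow> u z < c z \<and> c z < M \<and> open (U z) \<and> z \<in> U z \<and> (\<forall>w\<in>U z\<inter>K. u w < c z)"
    by metis
  have "K \<subseteq> (\<Union>z\<in>K. U z)" using cU by blast
  then obtain T where T: "T \<subseteq> K" "finite T" "K \<subseteq> (\<Union>z\<in>T. U z)"
    using compactE_image[OF assms(1), of K U] cU by metis
  have "T \<noteq> {}" using T assms(2) by auto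
  define m where "m = Max (c ` T)"
  have "m < M" unfolding m_def using T \<open>T \<noteq> {}\<close> cU by (subst Max_less_iff) auto
  have "\<forall>w\<in>K. u w \<le> m"
  proof
    fix w assume w: "w \<in> K"
    then obtain t where t: "t \<in> T" "w \<in> U t" using T by blast
    then have "u w < c t" using cU T w by blast
    also have "c t \<le> m" unfolding m_def using t T by auto
    finally show "u w \<le> m" by simp
  qed
  then have "M \<le> m" unfolding M_def by (simp add: SUP_least)
  then show False using \<open>m < M\<close> by simp
qed

lemma ereal_minus_less: "(a::ereal) - ereal b < ereal c \<longleftrightarrow> a < ereal (b + c)"
  by (cases a) auto
lemma ereal_minus_le: "(a::ereal) - ereal b \<le> ereal c \<longleftrightarrow> a \<le> ereal (b + c)"
  by (cases a) auto

lemma usc_minus: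
  fixes v :: "complex \<Rightarrow> ereal" and \<phi> :: "complex \<Rightarrow> real"
  assumes "usc_on S v" "\<forall>x\<in>S. v x < \<infinity>" "w \<in> S" "continuous (at w) \<phi>" "v w - ereal (\<phi> w) < c"
  shows "\<exists>U. open U \<and> w \<in> U \<and> (\<forall>x\<in>U\<inter>S. v x - ereal (\<phi> x) < c)"
proof (cases c)
  case PInf
  then show ?thesis proof (intro exI[of _ UNIV] conjI ballI)
    fix x assume "x \<in> UNIV \<inter> S"
    then have "v x < \<infinity>" using assms(2) by auto
    then show "v x - ereal (\<phi> x) < c" using PInf by (cases "v x") auto
  qed auto
next
  case MInf then show ?thesis using assms by simp
next
  case (real d)
  then have "v w < ereal (\<phi> w + d)" using assms(5) ereal_minus_less by simp
  then obtain a where a: "v w < ereal a" "a < \<phi> w + d"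
  proof (cases "v w")
    case (real y)
    then show ?thesis using that[of "(y + (\<phi> w + d))/2"] \<open>v w < ereal (\<phi> w + d)\<close> by auto
  next
    case MInf
    then show ?thesis using that[of "\<phi> w + d - 1"] by auto
  qed (use \<open>v w < ereal (\<phi> w + d)\<close> in auto)
  have "\<forall>\<^sub>F x in at w within S. v x < ereal a" using assms(1,3) a(1) unfolding usc_on_def by blast
  then obtain U1 where U1: "open U1" "w \<in> U1" "\<forall>x\<in>U1. x \<noteq> w \<longrightarrow> x \<in> S \<longrightarrow> v x < ereal a"
    unfolding eventually_at_topological by blast
  have "((\<lambda>x. \<phi> x + d) \<longlongrightarrow> \<phi> w + d) (at w)" using assms(4)
    by (intro tendsto_intros) (simp add: continuous_at)
  then have "\<forall>\<^sub>F x in at w. a < \<phi> x + d" using a(2) by (rule order_tendstoD)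
  then obtain U2 where U2: "open U2" "w \<in> U2" "\<forall>x\<in>U2. x \<noteq> w \<longrightarrow> x \<in> UNIV \<longrightarrow> a < \<phi> x + d"
    unfolding eventually_at_topological by blast
  show ?thesis
  proof (intro exI[of _ "U1 \<inter> U2"] conjI ballI)
    fix x assume x: "x \<in> U1 \<inter> U2 \<inter> S"
    show "v x - ereal (\<phi> x) < c"
    proof (cases "x = w")
      case True then show ?thesis using assms(5) by simp
    next
      case False
      then have "v x < ereal a" "a < \<phi> x + d" using U1 U2 x by auto
      then have "v x < ereal (\<phi> x + d)" by (metis less_ereal.simps(1) order.strict_trans)
      then show ?thesis using real ereal_minus_less by simp
    qed
  qed (use U1 U2 in auto)
qed

lemma norm_circle_sq:
  "(norm (z0 + of_real r * cis t))^2 = (norm z0)^2 + r^2 + 2 * Re (cnj z0 * (of_real r * cis t))"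
proof -
  have "(norm (z0 + of_real r * cis t))^2 = (Re z0 + r * cos t)^2 + (Im z0 + r * sin t)^2"
    by (simp add: cmod_power2)
  also have "\<dots> = (Re z0)^2 + (Im z0)^2 + r^2 * ((sin t)^2 + (cos t)^2) + 2 * (Re z0 * r * cos t + Im z0 * r * sin t)"
    by algebra
  also have "\<dots> = (Re z0)^2 + (Im z0)^2 + r^2 + 2 * (Re z0 * r * cos t + Im z0 * r * sin t)"
    by simp
  also have "\<dots> = (norm z0)^2 + r^2 + 2 * Re (cnj z0 * (of_real r * cis t))"
    by (simp add: cmod_power2 algebra_simps)
  finally show ?thesis .
qed

lemma max_principle:
  fixes F :: "complex \<Rightarrow> complex" and v :: "complex \<Rightarrow> ereal"
  assumes opn: "open \<Omega>" and bnd: "bounded \<Omega>" and sub: "\<Omega> \<subseteq> unit_disc"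
    and sh: "subharmonic_on unit_disc v" and hol: "F holomorphic_on \<Omega>"
    and bd: "\<And>\<zeta>. \<zeta> \<in> frontier \<Omega> \<Longrightarrow> \<exists>e>0. \<forall>w\<in>\<Omega>. dist w \<zeta> < e \<longrightarrow> v w < ereal (Re (F w))"
    and z: "z \<in> \<Omega>"
  shows "v z \<le> ereal (Re (F z))"
proof (rule ccontr)
  assume "\<not> ?thesis" then have gt: "ereal (Re (F z)) < v z" by simp
  have fin: "\<forall>x\<in>unit_disc. v x < \<infinity>" using sh unfolding subharmonic_on_def by blast
  have uscv: "usc_on unit_disc v" using sh unfolding subharmonic_on_def by blast
  have smean: "\<forall>x\<in>unit_disc. \<exists>\<rho>>0. \<forall>r. 0 < r \<and> r < \<rho> \<longrightarrow> v x \<le> circle_mean v x r"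
    using sh unfolding subharmonic_on_def by blast
  obtain x where x: "v z = ereal x" using gt fin z sub by (cases "v z") auto
  define c where "c = (x - Re (F z)) / 3"
  have c0: "c > 0" using gt x unfolding c_def by simp
  obtain D0 where D0: "\<forall>w\<in>closure \<Omega>. norm w \<le> D0" using bounded_closure[OF bnd] bounded_iff by blast
  define D where "D = \<bar>D0\<bar>"
  have D: "\<forall>w\<in>closure \<Omega>. norm w \<le> D" "D \<ge> 0" using D0 unfolding D_def by force+
  define \<eta> where "\<eta> = c / (D^2 + 1)"
  have D1: "D^2 + 1 > 0" by (smt (verit) zero_le_power2)
  have \<eta>0: "\<eta> > 0" unfolding \<eta>_def using c0 D1 by (simp add: divide_pos_pos)
  have \<eta>c: "\<eta> * (norm w)^2 < c" if "w \<in> closure \<Omega>" for w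
  proof -
    have "(norm w)^2 \<le> D^2" using D that by (simp add: power_mono)
    then have "\<eta> * (norm w)^2 \<le> \<eta> * D^2" using \<eta>0 by simp
    also have "\<dots> < \<eta> * (D^2 + 1)" using \<eta>0 by simp
    also have "\<dots> = c" unfolding \<eta>_def using D1 by simp
    finally show ?thesis .
  qed
  define \<phi> where "\<phi> w = Re (F w) + c - \<eta> * (norm w)^2" for w
  define u where "u w = v w - ereal (\<phi> w)" for w
  have contF: "continuous_on \<Omega> F" using hol holomorphic_on_imp_continuous_on by blast
  have contphi: "continuous (at w) \<phi>" if "w \<in> \<Omega>" for w
  proof -
    have "continuous (at w) F" using contF opn that continuous_on_eq_continuous_at by blast
    then have "continuous (at w) (\<lambda>x. Re (F x))" by (rule continuous_Re)
    then show ?thesis unfolding \<phi>_def by (intro continuous_intros)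
  qed
  obtain e where e: "\<And>\<zeta>. \<zeta> \<in> frontier \<Omega> \<Longrightarrow> e \<zeta> > 0 \<and> (\<forall>w\<in>\<Omega>. dist w \<zeta> < e \<zeta> \<longrightarrow> v w < ereal (Re (F w)))"
    using bd by metis
  define W where "W = (\<Union>\<zeta>\<in>frontier \<Omega>. ball \<zeta> (e \<zeta>))"
  have oW: "open W" unfolding W_def by auto
  have fW: "frontier \<Omega> \<subseteq> W" unfolding W_def using e by force
  define K where "K = closure \<Omega> - W"
  have cK: "compact K" unfolding K_def using oW bounded_closure[OF bnd]
    by (intro compact_eq_bounded_closed[THEN iffD2] conjI closed_Diff) (auto intro: bounded_subset)
  have KO: "K \<subseteq> \<Omega>" unfolding K_def using fW opn by (auto simp: frontier_def interior_open)
  have uW: "u w < 0" if wO: "w \<in> \<Omega>" and wW: "w \<in> W" for w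
  proof -
    obtain \<zeta> where "\<zeta> \<in> frontier \<Omega>" "w \<in> ball \<zeta> (e \<zeta>)" using wW unfolding W_def by blast
    then have "v w < ereal (Re (F w))" using e wO by (auto simp: dist_commute)
    moreover have "Re (F w) < \<phi> w" using \<eta>c[of w] wO closure_subset unfolding \<phi>_def by auto
    ultimately have "v w < ereal (\<phi> w + 0)" by (metis add.right_neutral less_ereal.simps(1) order.strict_trans)
    then show ?thesis unfolding u_def using ereal_minus_less[of "v w" "\<phi> w" 0] by (simp add: zero_ereal_def)
  qed
  have uz: "u z > 0"
  proof -
    have "\<phi> z \<le> Re (F z) + c" unfolding \<phi>_def using \<eta>0 by simp
    moreover have "x - Re (F z) = 3*c" unfolding c_def by simp
    ultimately have "\<phi> z + 0 < x" using c0 by linarith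
    then show ?thesis unfolding u_def x by (simp add: zero_ereal_def)
  qed
  have zK: "z \<in> K" using uz uW z closure_subset unfolding K_def by fastforce
  have "\<exists>z0\<in>K. \<forall>w\<in>K. u w \<le> u z0"
  proof (rule usc_max[OF cK])
    show "K \<noteq> {}" using zK by auto
    fix w c' assume "w \<in> K" "u w < c'"
    then obtain U where "open U" "w \<in> U" "\<forall>x\<in>U\<inter>unit_disc. v x - ereal (\<phi> x) < c'"
      using usc_minus[OF uscv fin, of w \<phi> c'] contphi KO sub unfolding u_def by blast
    then show "\<exists>U. open U \<and> w \<in> U \<and> (\<forall>w\<in>U\<inter>K. u w < c')" using KO sub unfolding u_def by blast
  qed
  then obtain z0 where z0: "z0 \<in> K" "\<forall>w\<in>K. u w \<le> u z0" by blast
  have z0O: "z0 \<in> \<Omega>" using z0 KO by auto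
  have uz0: "u z0 > 0" using z0 zK uz by (meson order_less_le_trans)
  have allO: "\<forall>w\<in>\<Omega>. u w \<le> u z0"
  proof
    fix w assume w: "w \<in> \<Omega>"
    show "u w \<le> u z0"
    proof (cases "w \<in> W")
      case True then show ?thesis using uW[OF w] uz0 by simp
    next
      case False then have "w \<in> K" unfolding K_def using w closure_subset by auto
      then show ?thesis using z0 by blast
    qed
  qed
  obtain y where y: "v z0 = ereal y" using fin z0O sub uz0 unfolding u_def by (cases "v z0") auto
  define M where "M = y - \<phi> z0"
  have uz0M: "u z0 = ereal M" unfolding u_def M_def y by simp
  have vle: "v w \<le> ereal (\<phi> w + M)" if "w \<in> \<Omega>" for w
    using allO that uz0M ereal_minus_le[of "v w" "\<phi> w" M] unfolding u_def by simp
  obtain \<rho> where \<rho>: "\<rho> > 0" "\<forall>r. 0 < r \<and> r < \<rho> \<longrightarrow> v z0 \<le> circle_mean v z0 r"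
    using smean z0O sub by blast
  obtain \<epsilon> where \<epsilon>: "\<epsilon> > 0" "ball z0 \<epsilon> \<subseteq> \<Omega>" using opn z0O open_contains_ball by blast
  define r where "r = min \<rho> \<epsilon> / 2"
  have r: "0 < r" "r < \<rho>" "cball z0 r \<subseteq> \<Omega>" unfolding r_def using \<rho> \<epsilon> by auto
  define g where "g t = \<phi> (z0 + of_real r * cis t) + M" for t
  have circ: "z0 + of_real r * cis t \<in> \<Omega>" for t
    using r(1,3) by (auto simp: dist_norm norm_mult)
  have contg: "continuous_on {0..2*pi} g"
  proof -
    have "continuous_on {0..2*pi} (\<lambda>t. z0 + of_real r * cis t)" by (intro continuous_intros)
    then have "continuous_on {0..2*pi} (\<lambda>t. F (z0 + of_real r * cis t))"
      by (rule continuous_on_compose2[OF contF]) (use circ in auto)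
    then show ?thesis unfolding g_def \<phi>_def by (intro continuous_intros)
  qed
  have i1: "((\<lambda>t. Re (F (z0 + of_real r * cis t))) has_integral (2*pi*Re (F z0))) {0..2*pi}"
    using holo_mean_Re[OF hol opn r(3) r(1)] .
  have "(\<lambda>w. cnj z0 * (w - z0)) holomorphic_on UNIV" by (intro holomorphic_intros)
  from holo_mean_Re[OF this open_UNIV _ r(1), of z0]
  have i2: "((\<lambda>t. Re (cnj z0 * (of_real r * cis t))) has_integral 0) {0..2*pi}" by simp
  have ic: "((\<lambda>t. k) has_integral k * (2*pi)) {0..2*pi}" for k :: real
    using has_integral_const_real[of k 0 "2*pi"] by (simp add: mult.commute)
  have i3: "((\<lambda>t. (norm (z0 + of_real r * cis t))^2) has_integral (2*pi*((norm z0)^2 + r^2))) {0..2*pi}"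
  proof -
    have "((\<lambda>t. ((norm z0)^2 + r^2) + 2 * Re (cnj z0 * (of_real r * cis t))) has_integral
        (((norm z0)^2 + r^2) * (2*pi) + 2 * 0)) {0..2*pi}"
      by (intro has_integral_add ic has_integral_mult_right i2)
    then show ?thesis unfolding norm_circle_sq by (simp add: algebra_simps)
  qed
  have "(g has_integral (2*pi*Re (F z0) + (c + M) * (2*pi) - \<eta> * (2*pi*((norm z0)^2 + r^2)))) {0..2*pi}"
    unfolding g_def \<phi>_def
    by (rule has_integral_eq[rotated, OF has_integral_diff[OF has_integral_add[OF i1 ic[of "c + M"]] has_integral_mult_right[OF i3, of \<eta>]]]) (simp add: algebra_simps)
  then have gi: "(g has_integral (2*pi*(\<phi> z0 + M - \<eta> * r^2))) {0..2*pi}"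
    unfolding \<phi>_def by (simp add: algebra_simps)
  have "circle_mean v z0 r \<le> ereal (2*pi*(\<phi> z0 + M - \<eta> * r^2) / (2*pi))"
    by (rule circle_mean_le[OF contg gi]) (use vle circ in \<open>auto simp: g_def\<close>)
  also have "\<dots> = ereal (y - \<eta> * r^2)" unfolding M_def by simp
  also have "\<dots> < v z0" using y \<eta>0 r(1) by simp
  finally show False using \<rho>(2) r by (meson leD)
qed



lemma Wparts:
  fixes q :: complex and R :: real
  shows "Re ((of_real R + q)/(of_real R - q)) = (R^2 - (norm q)^2) / (norm (of_real R - q))^2"
    and "Im ((of_real R + q)/(of_real R - q)) = 2*R*Im q / (norm (of_real R - q))^2"
  unfolding Re_divide Im_divide cmod_power2 by (simp_all add: power2_eq_square algebra_simps)

lemma Im_Ln_pos_Re: "Re w > 0 \<Longrightarrow> Im (Ln w) = arctan (Im w / Re w)"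
  using Im_Ln_eq[of w] by (cases "w = 0") auto

lemma arctan_le_self: "0 \<le> x \<Longrightarrow> arctan x \<le> x"
proof -
  assume x: "0 \<le> x"
  have "(\<lambda>y. y - arctan y) 0 \<le> (\<lambda>y. y - arctan y) x"
  proof (rule DERIV_nonneg_imp_nondecreasing[OF x])
    fix y :: real
    show "\<exists>d. ((\<lambda>y. y - arctan y) has_real_derivative d) (at y) \<and> 0 \<le> d"
    proof (intro exI conjI)
      show "((\<lambda>y. y - arctan y) has_real_derivative (1 - inverse (1 + y^2))) (at y)"
        by (intro derivative_eq_intros DERIV_arctan) auto
      have "inverse (1 + y^2) \<le> 1" by (simp add: inverse_le_1_iff)
      then show "0 \<le> 1 - inverse (1 + y^2)" by simp
    qed
  qed
  then show ?thesis by simp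
qed

lemma norm_cis_minus_1: "norm (cis d - 1) \<le> \<bar>d\<bar>"
proof -
  have "(norm (cis d - 1))^2 = (cos d - 1)^2 + (sin d)^2" by (simp add: cmod_power2)
  also have "\<dots> = 2 - 2 * cos d" by (simp add: power2_eq_square algebra_simps)
  also have "cos d = 1 - 2 * (sin (d/2))^2" using cos_double_sin[of "d/2"] by simp
  also have "2 - 2 * (1 - 2 * (sin (d/2))^2) = (2 * sin (d/2))^2" by (simp add: power2_eq_square)
  finally have "(norm (cis d - 1))^2 = (2 * sin (d/2))^2" .
  then have "norm (cis d - 1) = \<bar>2 * sin (d/2)\<bar>" by (metis norm_ge_zero real_sqrt_abs real_sqrt_unique)
  also have "\<dots> \<le> 2 * \<bar>d/2\<bar>" using abs_sin_x_le_abs_x[of "d/2"] by (simp add: abs_mult)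
  finally show ?thesis by simp
qed

lemma Lform: "(\<rho>::real) < 1 \<Longrightarrow> ln (exp 1 / (1 - \<rho>)) = 1 - ln (1 - \<rho>)"
  using ln_div[of "exp 1" "1 - \<rho>"] by simp

lemma eventually_ball_usc:
  assumes "usc_on S v" "\<zeta> \<in> S" "v \<zeta> < c"
  shows "\<exists>e>0. \<forall>w\<in>S. w \<noteq> \<zeta> \<and> dist w \<zeta> < e \<longrightarrow> v w < c"
  using assms unfolding usc_on_def eventually_at by blast

lemma eventually_ball_cont:
  fixes f :: "complex \<Rightarrow> real"
  assumes "continuous (at \<zeta>) f" "a < f \<zeta>"
  shows "\<exists>e>0. \<forall>w. dist w \<zeta> < e \<longrightarrow> a < f w"
proof -
  have "(f \<longlongrightarrow> f \<zeta>) (at \<zeta>)" using assms(1) continuous_at by blast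
  then have "\<forall>\<^sub>F w in at \<zeta>. a < f w" using assms(2) order_tendstoD(1) by blast
  then obtain e where "e > 0" "\<forall>w. w \<noteq> \<zeta> \<and> dist w \<zeta> < e \<longrightarrow> a < f w"
    unfolding eventually_at by auto
  then show ?thesis using assms(2) by (metis)
qed



lemma sarctan: "s = 1 \<or> s = -1 \<Longrightarrow> s * arctan y = arctan (s * y)"
  by (auto simp: arctan_minus)

lemma key:
  fixes v :: "complex \<Rightarrow> ereal" and C \<sigma> \<theta> r0 r \<delta> :: real
  assumes sh: "subharmonic_on unit_disc v"
    and bnd: "\<forall>z\<in>unit_disc. v z \<le> ereal (C * ln (exp 1 / (1 - norm z)))"
    and \<sigma>0: "\<sigma> > 0" and r0: "0 < r0" "r0 < 1"
    and ray: "\<forall>\<rho>. r0 < \<rho> \<and> \<rho> < 1 \<longrightarrow> v (of_real \<rho> * cis \<theta>) < ereal (- \<sigma> * ln (exp 1 / (1 - \<rho>)))"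
    and r: "(1 + r0)/2 < r" "r < 1"
    and \<delta>: "\<bar>\<delta>\<bar> < min (1/8) (\<sigma> / (44 * (2*\<bar>C\<bar> + \<sigma> + 1))) * (1 - r)"
  shows "v (of_real r * cis (\<theta> + \<delta>)) < ereal (- (\<sigma>/2) * ln (exp 1 / (1 - r)))"
proof -
  define ll where "ll = 1 - ln (1 - r)"
  have r0r: "r0 < r" using r r0 by argo
  have "ln (1 - r) \<le> 0" using r r0r r0 by simp
  then have ll1: "ll \<ge> 1" unfolding ll_def by simp
  have Lr: "ln (exp 1 / (1 - r)) = ll" unfolding ll_def using Lform r by blast
  show ?thesis
  proof (cases "\<delta> = 0")
    case True
    have "v (of_real r * cis \<theta>) < ereal (- \<sigma> * ll)" using ray r r0r Lr by auto
    also have "\<dots> \<le> ereal (- (\<sigma>/2) * ll)" using \<sigma>0 ll1 by simp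
    finally show ?thesis using True Lr by simp
  next
    case False
    define K where "K = 2*\<bar>C\<bar> + \<sigma> + 1"
    have K0: "K > 0" unfolding K_def using \<sigma>0 by simp
    define \<tau> where "\<tau> = min (1/8) (\<sigma> / (44 * K))"
    have \<tau>0: "\<tau> > 0" unfolding \<tau>_def using \<sigma>0 K0 by simp
    have \<tau>1: "\<tau> \<le> 1/8" and \<tau>2: "\<tau> \<le> \<sigma> / (44 * K)" unfolding \<tau>_def by auto
    have \<delta>\<tau>: "\<bar>\<delta>\<bar> < \<tau> * (1 - r)" using \<delta> unfolding \<tau>_def K_def .
    define s where "s = sgn \<delta>"
    have s01: "s = 1 \<or> s = -1" unfolding s_def using False by (auto simp: sgn_if)
    have ss: "s * s = 1" using s01 by auto
    define R where "R = (1 - r)/4"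
    have R0: "R > 0" unfolding R_def using r by simp
    have rR: "r0 < r - R" "r + R < 1" unfolding R_def using r r0 by argo+
    define \<xi> where "\<xi> z = z * cis (- \<theta>) - of_real r" for z
    have z\<xi>: "z = (\<xi> z + of_real r) * cis \<theta>" for z
      unfolding \<xi>_def by (simp add: mult.assoc cis_mult)
    have nz: "norm z = norm (\<xi> z + of_real r)" for z
      by (subst z\<xi>[of z]) (simp add: norm_mult)
    have cont\<xi>: "continuous_on UNIV \<xi>" unfolding \<xi>_def by (intro continuous_intros)
    define Wf where "Wf z = (of_real R + \<xi> z)/(of_real R - \<xi> z)" for z
    define \<Omega> where "\<Omega> = {z. norm (\<xi> z) < R \<and> s * Im (\<xi> z) > 0}"
    define A where "A = - \<sigma> * (ll - ln (5/4))"
    define B where "B = \<bar>C\<bar> * (ll + ln (4/3)) + 1 - A"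
    define F where "F z = of_real A + of_real (B * s * 2 / pi) * (- \<i> * Ln (Wf z))" for z
    have ReF: "Re (F z) = A + B * (2/pi) * (s * Im (Ln (Wf z)))" for z
      by (simp add: F_def)
    have l54: "0 \<le> ln (5/4::real)" "ln (5/4::real) < 1/4"
      using ln_add_one_self_less_self[of "1/4::real"] by auto
    have l43: "0 \<le> ln (4/3::real)" "ln (4/3::real) \<le> 1/3"
      using ln_le_minus_one[of "4/3::real"] by auto
    have "0 \<le> \<bar>C\<bar> * (ll + ln (4/3))" using l43 ll1 by simp
    moreover have "0 \<le> \<sigma> * (ll - ln (5/4))" using l54 ll1 \<sigma>0 by simp
    ultimately have B0: "B \<ge> 0" unfolding B_def A_def by argo
    have Rne: "of_real R - \<xi> z \<noteq> 0" if "norm (\<xi> z) < R \<or> Im (\<xi> z) \<noteq> 0" for z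
      using that by (metis R0 Im_complex_of_real eq_iff_diff_eq_0 norm_of_real abs_of_pos order_less_irrefl)
    have ReW: "Re (Wf z) > 0" if "norm (\<xi> z) < R" for z
    proof -
      have "(norm (\<xi> z))^2 < R^2" using that by (simp add: power_strict_mono)
      moreover have "(norm (of_real R - \<xi> z))^2 > 0" using Rne that by simp
      ultimately show ?thesis unfolding Wf_def Wparts by (simp add: divide_pos_pos)
    qed
    have sImW: "s * Im (Wf z) = 2 * R * (s * Im (\<xi> z)) / (norm (of_real R - \<xi> z))^2" for z
      unfolding Wf_def Wparts by (simp add: algebra_simps)
    have om_nn: "0 \<le> s * Im (Ln (Wf z))" if "z \<in> \<Omega>" for z
    proof -
      have z: "norm (\<xi> z) < R" "s * Im (\<xi> z) > 0" using that unfolding \<Omega>_def by auto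
      have "s * Im (Ln (Wf z)) = arctan (s * Im (Wf z) / Re (Wf z))"
        using Im_Ln_pos_Re[OF ReW[OF z(1)]] sarctan[OF s01] by simp
      moreover have "s * Im (Wf z) \<ge> 0" unfolding sImW using z R0 by simp
      ultimately show ?thesis using ReW[OF z(1)] by simp
    qed
    have ReFA: "A \<le> Re (F z)" if "z \<in> \<Omega>" for z
      unfolding ReF using om_nn[OF that] B0 by simp
    have hol: "F holomorphic_on \<Omega>"
    proof -
      have h\<xi>: "\<xi> holomorphic_on \<Omega>" unfolding \<xi>_def by (intro holomorphic_intros)
      have hW: "Wf holomorphic_on \<Omega>" unfolding Wf_def
        by (intro holomorphic_intros h\<xi>) (use Rne in \<open>auto simp: \<Omega>_def\<close>)
      have hL: "(\<lambda>z. Ln (Wf z)) holomorphic_on \<Omega>"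
        by (rule holomorphic_on_Ln'[OF _ hW]) (auto simp: \<Omega>_def complex_nonpos_Reals_iff dest: ReW)
      show ?thesis unfolding F_def by (intro holomorphic_intros hL)
    qed
    have c1: "continuous_on UNIV (\<lambda>z. norm (\<xi> z))" by (intro continuous_intros cont\<xi>)
    have c2: "continuous_on UNIV (\<lambda>z. s * Im (\<xi> z))" by (intro continuous_intros cont\<xi>)
    have opn: "open \<Omega>" unfolding \<Omega>_def
      by (intro open_Collect_conj open_Collect_less c1 c2 continuous_on_const)
    have \<Omega>D: "\<Omega> \<subseteq> unit_disc"
    proof
      fix z assume "z \<in> \<Omega>"
      then have "norm (\<xi> z) < R" unfolding \<Omega>_def by auto
      moreover have "norm (\<xi> z + of_real r) \<le> norm (\<xi> z) + r"
        using norm_triangle_ineq[of "\<xi> z" "of_real r"] r0r r0 by simp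
      ultimately have "norm z < 1" using nz[of z] rR by argo
      then show "z \<in> unit_disc" unfolding unit_disc_def by simp
    qed
    have bdd: "bounded \<Omega>" using \<Omega>D unfolding unit_disc_def by (meson bounded_ball bounded_subset)
    have uscv: "usc_on unit_disc v" using sh unfolding subharmonic_on_def by blast
    have bdry: "\<exists>e>0. \<forall>w\<in>\<Omega>. dist w \<zeta> < e \<longrightarrow> v w < ereal (Re (F w))" if \<zeta>: "\<zeta> \<in> frontier \<Omega>" for \<zeta>
    proof -
      define Cl where "Cl = {z. norm (\<xi> z) \<le> R \<and> 0 \<le> s * Im (\<xi> z)}"
      have "closed Cl" unfolding Cl_def by (intro closed_Collect_conj closed_Collect_le c1 c2 continuous_on_const)
      moreover have "\<Omega> \<subseteq> Cl" unfolding \<Omega>_def Cl_def by auto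
      ultimately have "closure \<Omega> \<subseteq> Cl" by (simp add: closure_minimal)
      then have \<zeta>C: "norm (\<xi> \<zeta>) \<le> R" "0 \<le> s * Im (\<xi> \<zeta>)" using \<zeta> unfolding frontier_def Cl_def by auto
      have \<zeta>nO: "\<zeta> \<notin> \<Omega>" using \<zeta> opn by (simp add: frontier_def interior_open)
      show ?thesis
      proof (cases "Im (\<xi> \<zeta>) = 0")
        case True
        define p where "p = Re (\<xi> \<zeta>)"
        have \<xi>p: "\<xi> \<zeta> = of_real p" unfolding p_def using True by (simp add: complex_eq_iff)
        have "\<bar>p\<bar> \<le> R" using \<zeta>C(1) \<xi>p by simp
        then have pR: "- R \<le> p" "p \<le> R" by auto
        define \<rho> where "\<rho> = p + r"
        have \<zeta>\<rho>: "\<zeta> = of_real \<rho> * cis \<theta>" using z\<xi>[of \<zeta>] \<xi>p unfolding \<rho>_def by simp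
        have \<rho>: "r0 < \<rho>" "\<rho> < 1" "r - R \<le> \<rho>" using pR rR unfolding \<rho>_def by argo+
        have v\<rho>: "v \<zeta> < ereal (- \<sigma> * ln (exp 1 / (1 - \<rho>)))" using ray \<rho> \<zeta>\<rho> by auto
        have "ln (1 - \<rho>) \<le> ln (5/4 * (1 - r))"
        proof (subst ln_le_cancel_iff)
          show "0 < 1 - \<rho>" using \<rho> by argo
          show "0 < 5/4 * (1 - r)" using r by argo
          show "1 - \<rho> \<le> 5/4 * (1 - r)" using \<rho> unfolding R_def by argo
        qed
        also have "\<dots> = ln (5/4) + ln (1 - r)" by (subst ln_mult) (use r in auto)
        finally have "ll - ln (5/4) \<le> 1 - ln (1 - \<rho>)" unfolding ll_def by argo
        then have "\<sigma> * (ll - ln (5/4)) \<le> \<sigma> * (1 - ln (1 - \<rho>))" using \<sigma>0 by (simp add: mult_left_mono)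
        then have "- \<sigma> * ln (exp 1 / (1 - \<rho>)) \<le> A" unfolding A_def Lform[OF \<rho>(2)] by simp
        then have vA: "v \<zeta> < ereal A" using v\<rho> by (meson ereal_less_eq(3) order_less_le_trans)
        have \<zeta>D: "\<zeta> \<in> unit_disc" using \<zeta>\<rho> \<rho> r0 unfolding unit_disc_def by (simp add: norm_mult)
        obtain e where e: "e > 0" "\<forall>w\<in>unit_disc. w \<noteq> \<zeta> \<and> dist w \<zeta> < e \<longrightarrow> v w < ereal A"
          using eventually_ball_usc[OF uscv \<zeta>D vA] by blast
        show ?thesis
        proof (intro exI[of _ e] conjI ballI impI)
          fix w assume w: "w \<in> \<Omega>" "dist w \<zeta> < e"
          have "w \<noteq> \<zeta>" using w \<zeta>nO by auto
          then have "v w < ereal A" using e w \<Omega>D by auto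
          also have "\<dots> \<le> ereal (Re (F w))" using ReFA[OF w(1)] by simp
          finally show "v w < ereal (Re (F w))" .
        qed (use e in auto)
      next
        case False
        have sIm: "0 < s * Im (\<xi> \<zeta>)" using \<zeta>C(2) False s01 by auto
        have nR: "norm (\<xi> \<zeta>) = R" using \<zeta>C(1) \<zeta>nO sIm unfolding \<Omega>_def by auto
        have Rn0: "of_real R - \<xi> \<zeta> \<noteq> 0" using Rne False by blast
        have d0: "(norm (of_real R - \<xi> \<zeta>))^2 > 0" using Rn0 by simp
        have ReW0: "Re (Wf \<zeta>) = 0" unfolding Wf_def Wparts nR by simp
        have sImW0: "s * Im (Wf \<zeta>) > 0" unfolding sImW using sIm R0 d0 by simp
        have Wne: "Wf \<zeta> \<noteq> 0" using sImW0 by auto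
        have sL: "s * Im (Ln (Wf \<zeta>)) = pi/2"
        proof -
          have "Im (Ln (Wf \<zeta>)) = (if Im (Wf \<zeta>) > 0 then pi/2 else -pi/2)" using Im_Ln_eq[OF Wne] ReW0 by simp
          then show ?thesis using s01 sImW0 by auto
        qed
        have ReF\<zeta>: "Re (F \<zeta>) = A + B" unfolding ReF sL by simp
        define top where "top = A + B"
        have top': "top = \<bar>C\<bar> * (ll + ln (4/3)) + 1" unfolding top_def B_def by simp
        have "norm (\<xi> \<zeta> + of_real r) \<le> norm (\<xi> \<zeta>) + r"
          using norm_triangle_ineq[of "\<xi> \<zeta>" "of_real r"] r0r r0 by simp
        then have n\<zeta>: "norm \<zeta> \<le> r + R" using nz[of \<zeta>] nR by argo
        have n1: "norm \<zeta> < 1" using n\<zeta> rR by argo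
        have \<zeta>D: "\<zeta> \<in> unit_disc" using n1 unfolding unit_disc_def by simp
        have vb: "v \<zeta> \<le> ereal (C * ln (exp 1 / (1 - norm \<zeta>)))" using bnd \<zeta>D by blast
        have cb: "C * ln (exp 1 / (1 - norm \<zeta>)) \<le> top - 1"
        proof -
          have lz: "ln (exp 1 / (1 - norm \<zeta>)) = 1 - ln (1 - norm \<zeta>)" using Lform n1 by blast
          have l0: "ln (1 - norm \<zeta>) \<le> 0" using n1 by simp
          have "ln (3/4 * (1 - r)) \<le> ln (1 - norm \<zeta>)"
          proof (subst ln_le_cancel_iff)
            show "0 < 1 - norm \<zeta>" using n1 by argo
            show "0 < 3/4 * (1 - r)" using r by argo
            show "3/4 * (1 - r) \<le> 1 - norm \<zeta>" using n\<zeta> unfolding R_def by argo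
          qed
          moreover have "ln (3/4 * (1 - r)) = ln (3/4) + ln (1-r)" by (subst ln_mult) (use r in auto)
          moreover have "ln (3/4::real) = - ln (4/3)" by (simp add: ln_div)
          ultimately have h1: "1 - ln (1 - norm \<zeta>) \<le> ll + ln (4/3)" unfolding ll_def by argo
          have h0: "0 \<le> 1 - ln (1 - norm \<zeta>)" using l0 by argo
          have "C * (1 - ln (1 - norm \<zeta>)) \<le> \<bar>C\<bar> * (1 - ln (1 - norm \<zeta>))" using h0 by (simp add: mult_right_mono)
          also have "\<dots> \<le> \<bar>C\<bar> * (ll + ln (4/3))" using h1 by (simp add: mult_left_mono)
          finally show ?thesis unfolding lz top' by simp
        qed
        have v\<zeta>: "v \<zeta> < ereal (top - 1/2)" 
        proof -
          have "C * ln (exp 1 / (1 - norm \<zeta>)) < top - 1/2" using cb by argo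
          then show ?thesis using vb by (meson less_ereal.simps(1) order_le_less_trans)
        qed
        have c\<xi>: "continuous (at \<zeta>) \<xi>" using cont\<xi> continuous_on_eq_continuous_at open_UNIV by blast
        have cW: "continuous (at \<zeta>) Wf" unfolding Wf_def by (intro continuous_intros c\<xi>) (use Rn0 in auto)
        have "Wf \<zeta> \<notin> \<real>\<^sub>\<le>\<^sub>0" using sImW0 by (auto simp: complex_nonpos_Reals_iff)
        then have cL: "continuous (at \<zeta>) (\<lambda>z. Ln (Wf z))" using continuous_at_compose[OF cW continuous_at_Ln] by (simp add: o_def)
        have "continuous (at \<zeta>) F" unfolding F_def by (intro continuous_intros cL)
        then have cF: "continuous (at \<zeta>) (\<lambda>z. Re (F z))" by (rule continuous_Re)
        obtain e1 where e1: "e1 > 0" "\<forall>w. dist w \<zeta> < e1 \<longrightarrow> top - 1/2 < Re (F w)"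
          using eventually_ball_cont[OF cF, of "top - 1/2"] ReF\<zeta> top_def by auto
        obtain e2 where e2: "e2 > 0" "\<forall>w\<in>unit_disc. w \<noteq> \<zeta> \<and> dist w \<zeta> < e2 \<longrightarrow> v w < ereal (top - 1/2)"
          using eventually_ball_usc[OF uscv \<zeta>D v\<zeta>] by blast
        show ?thesis
        proof (intro exI[of _ "min e1 e2"] conjI ballI impI)
          fix w assume w: "w \<in> \<Omega>" "dist w \<zeta> < min e1 e2"
          have "w \<noteq> \<zeta>" using w \<zeta>nO by auto
          then have "v w < ereal (top - 1/2)" using e2 w \<Omega>D by auto
          also have "\<dots> < ereal (Re (F w))" using e1 w by auto
          finally show "v w < ereal (Re (F w))" .
        qed (use e1 e2 in auto)
      qed
    qed
    define z1 where "z1 = of_real r * cis (\<theta> + \<delta>)"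
    have \<xi>1: "\<xi> z1 = of_real r * (cis \<delta> - 1)"
    proof -
      have "cis (\<theta> + \<delta>) * cis (- \<theta>) = cis \<delta>" by (simp add: cis_mult)
      then show ?thesis unfolding z1_def \<xi>_def by (simp add: algebra_simps)
    qed
    define a where "a = norm (\<xi> z1)"
    have r0': "0 < r" using r0r r0 by argo
    have a1: "a \<le> \<bar>\<delta>\<bar>"
    proof -
      have "a = r * norm (cis \<delta> - 1)" unfolding a_def \<xi>1 using r0' by (simp add: norm_mult)
      also have "\<dots> \<le> 1 * \<bar>\<delta>\<bar>" using norm_cis_minus_1[of \<delta>] r r0' by (intro mult_mono) auto
      finally show ?thesis by simp
    qed
    have d4: "\<bar>\<delta>\<bar> < 4 * \<tau> * R" using \<delta>\<tau> unfolding R_def by (simp add: algebra_simps)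
    have "4 * \<tau> * R \<le> 4 * (1/8) * R" using \<tau>1 R0 by (intro mult_right_mono) auto
    then have aR: "a < R/2" using a1 d4 by argo
    have \<delta>small: "\<bar>\<delta>\<bar> < pi" using d4 \<open>4 * \<tau> * R \<le> 4 * (1/8) * R\<close> R_def r r0' pi_ge_two unfolding R_def by argo
    have sd: "s * sin \<delta> > 0"
    proof (cases "\<delta> > 0")
      case True
      then have "s = 1" unfolding s_def by simp
      moreover have "sin \<delta> > 0" using True \<delta>small by (intro sin_gt_zero) auto
      ultimately show ?thesis by simp
    next
      case False
      then have "\<delta> < 0" using \<open>\<delta> \<noteq> 0\<close> by simp
      then have "s = -1" unfolding s_def by simp
      moreover have "sin (- \<delta>) > 0" using \<open>\<delta> < 0\<close> \<delta>small by (intro sin_gt_zero) auto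
      ultimately show ?thesis by simp
    qed
    have sIm1: "s * Im (\<xi> z1) > 0" unfolding \<xi>1 using sd r0' by (simp add: algebra_simps)
    have z1\<Omega>: "z1 \<in> \<Omega>" unfolding \<Omega>_def using sIm1 aR R0 unfolding a_def by simp
    have vz1: "v z1 \<le> ereal (Re (F z1))" by (rule max_principle[OF opn bdd \<Omega>D sh hol bdry z1\<Omega>])
    have an: "norm (\<xi> z1) < R" using aR R0 unfolding a_def by simp
    define X where "X = s * Im (Wf z1) / Re (Wf z1)"
    have om1: "s * Im (Ln (Wf z1)) = arctan X"
      unfolding X_def using Im_Ln_pos_Re[OF ReW[OF an]] sarctan[OF s01] by simp
    define d where "d = (norm (of_real R - \<xi> z1))^2"
    have d0: "d > 0" unfolding d_def using Rne[of z1] an by simp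
    have a2: "a^2 \<le> (R/2)^2" using aR unfolding a_def by (intro power_mono) auto
    have R2: "(R/2)^2 = R^2/4" by (simp add: power_divide)
    have R2p: "R^2 > 0" using R0 by simp
    have Ra: "R^2 - a^2 > 0" using a2 R2 R2p by argo
    have Xeq: "X = 2 * R * (s * Im (\<xi> z1)) / (R^2 - a^2)"
      unfolding X_def sImW Wf_def[symmetric] using d0 Ra
      by (simp add: Wf_def Wparts a_def d_def[symmetric] field_simps)
    have X0: "X \<ge> 0" unfolding Xeq using sIm1 R0 Ra by simp
    have sa: "s * Im (\<xi> z1) \<le> a" using abs_Im_le_cmod[of "\<xi> z1"] s01 unfolding a_def by auto
    have Xb: "X \<le> 32 * \<tau> / 3"
    proof -
      have "2 * R * (s * Im (\<xi> z1)) \<le> 2 * R * a" using sa R0 by simp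
      also have "\<dots> \<le> 2 * R * (4 * \<tau> * R)" using a1 d4 R0 by (intro mult_left_mono) auto
      also have "\<dots> = (32 * \<tau> / 3) * (3 * R^2 / 4)" by (simp add: power2_eq_square)
      also have "\<dots> \<le> (32 * \<tau> / 3) * (R^2 - a^2)" using \<tau>0 a2 by (intro mult_left_mono) (auto simp: power2_eq_square)
      finally show ?thesis unfolding Xeq using Ra by (simp add: pos_divide_le_eq)
    qed
    have at1: "arctan X \<le> X" "0 \<le> arctan X" using arctan_le_self[OF X0] X0 by auto
    have "(2/pi) * arctan X \<le> 1 * arctan X" using at1 pi_ge_two by (intro mult_right_mono) auto
    then have t1: "B * ((2/pi) * arctan X) \<le> B * X" using B0 at1 by (intro mult_left_mono) auto
    have BK: "B \<le> K * ll"
    proof -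
      have "\<bar>C\<bar> * (ll + ln (4/3)) \<le> \<bar>C\<bar> * (2 * ll)" using l43 ll1 by (intro mult_left_mono) auto
      moreover have "\<sigma> * (ll - ln (5/4)) \<le> \<sigma> * ll" using l54 \<sigma>0 by simp
      ultimately show ?thesis unfolding B_def A_def K_def using ll1 by (simp add: algebra_simps)
    qed
    have "B * X \<le> (K * ll) * (32 * \<tau> / 3)" using BK Xb B0 X0 ll1 K0 by (intro mult_mono) auto
    also have "\<dots> \<le> (K * ll) * (32 * (\<sigma> / (44 * K)) / 3)" using \<tau>2 K0 ll1 by (intro mult_left_mono) auto
    also have "\<dots> = 8 * (\<sigma> * ll) / 33" using K0 by (simp add: field_simps)
    finally have BX: "B * X \<le> 8 * (\<sigma> * ll) / 33" .
    have ReF1: "Re (F z1) = A + B * ((2/pi) * arctan X)" unfolding ReF om1 by simp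
    have A1: "A = - (\<sigma> * ll) + \<sigma> * ln (5/4)" unfolding A_def by (simp add: algebra_simps)
    have s54: "\<sigma> * ln (5/4) < \<sigma> / 4" using l54 \<sigma>0 by simp
    have sl: "\<sigma> \<le> \<sigma> * ll" using ll1 \<sigma>0 by simp
    have "Re (F z1) < - ((\<sigma> * ll) / 2)" using ReF1 A1 t1 BX s54 sl \<sigma>0 by argo
    moreover have "- ((\<sigma> * ll) / 2) = - (\<sigma>/2) * ll" by simp
    ultimately have fin: "Re (F z1) < - (\<sigma>/2) * ll" by argo
    have "v z1 < ereal (- (\<sigma>/2) * ll)" using vz1 fin by (meson less_ereal.simps(1) order_le_less_trans)
    then show ?thesis unfolding Lr unfolding z1_def .
  qed
qed

theorem lemma8:
  shows "\<exists>(\<tau>2 :: real \<Rightarrow> real \<Rightarrow> real) (r1 :: real \<Rightarrow> real).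
     (\<forall>C \<sigma>. \<sigma> > 0 \<longrightarrow> \<tau>2 C \<sigma> > 0) \<and>
     (\<forall>r0. 0 < r0 \<and> r0 < 1 \<longrightarrow> r1 r0 < 1) \<and>
     (\<forall>(v :: complex \<Rightarrow> ereal) (C :: real) (\<sigma> :: real) (\<theta> :: real) (r0 :: real).
        subharmonic_on unit_disc v \<and>
        (\<forall>z\<in>unit_disc. v z \<le> ereal (C * ln (exp 1 / (1 - norm z)))) \<and>
        \<sigma> > 0 \<and> 0 \<le> \<theta> \<and> \<theta> \<le> 2 * pi \<and> 0 < r0 \<and> r0 < 1 \<and>
        (\<forall>r. r0 < r \<and> r < 1 \<longrightarrow>
              v (of_real r * cis \<theta>) < ereal (- \<sigma> * ln (exp 1 / (1 - r))))
      \<longrightarrow>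
        (\<forall>r \<delta>. r1 r0 < r \<and> r < 1 \<and> \<bar>\<delta>\<bar> < \<tau>2 C \<sigma> * (1 - r) \<longrightarrow>
              v (of_real r * cis (\<theta> + \<delta>)) < ereal (- (\<sigma> / 2) * ln (exp 1 / (1 - r)))))"
proof (rule exI[of _ "\<lambda>C \<sigma>. min (1/8) (\<sigma> / (44 * (2*\<bar>C\<bar> + \<sigma> + 1)))"],
       rule exI[of _ "\<lambda>r0. (1 + r0)/2"], intro conjI allI impI)
  fix C \<sigma> :: real assume "\<sigma> > 0"
  then show "min (1/8) (\<sigma> / (44 * (2*\<bar>C\<bar> + \<sigma> + 1))) > 0" by (simp add: add_pos_nonneg)
next
  fix r0 :: real assume "0 < r0 \<and> r0 < 1"
  then show "(1 + r0)/2 < 1" by argo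
next
  fix v :: "complex \<Rightarrow> ereal" and C \<sigma> \<theta> r0 r \<delta> :: real
  assume h: "subharmonic_on unit_disc v \<and>
        (\<forall>z\<in>unit_disc. v z \<le> ereal (C * ln (exp 1 / (1 - norm z)))) \<and>
        \<sigma> > 0 \<and> 0 \<le> \<theta> \<and> \<theta> \<le> 2 * pi \<and> 0 < r0 \<and> r0 < 1 \<and>
        (\<forall>r. r0 < r \<and> r < 1 \<longrightarrow>
              v (of_real r * cis \<theta>) < ereal (- \<sigma> * ln (exp 1 / (1 - r))))"
    and h2: "(1 + r0)/2 < r \<and> r < 1 \<and> \<bar>\<delta>\<bar> < min (1/8) (\<sigma> / (44 * (2*\<bar>C\<bar> + \<sigma> + 1))) * (1 - r)"
  show "v (of_real r * cis (\<theta> + \<delta>)) < ereal (- (\<sigma> / 2) * ln (exp 1 / (1 - r)))"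
    using key[of v C \<sigma> r0 \<theta> r \<delta>] h h2 by blast
qed

end
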